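(* Let $Y\in\{0,1\}$ be a binary random label with $0<P(Y=1)<1$, and let $X=(\mathbf{x}_1,\dots,\mathbf{x}_M)$ be a bag of $M$ random instances which are conditionally independent given $Y$, each having a conditional density $p(\mathbf{x}_m\mid Y)$. Let $I\subseteq\{1,\dots,M\}$ be the set of informative instances, with $|I|=\tilde M\ge 1$, where every uninformative instance $m\notin I$ satisfies $p(\mathbf{x}_m\mid Y=1)=p(\mathbf{x}_m\mid Y=0)$. Set $u_m=1$ if $m\in I$ and $u_m=0$ otherwise. Let $g$ be a real-valued function with $\sigma(g(\mathbf{x}_m))=P(Y=1\mid \mathbf{x}_m)$ for every $m\in I$, where $\sigma(t)=1/(1+e^{-t})$, and define $$f(X)=\frac{1}{\tilde M}\sum_{m=1}^{M} g(\mathbf{x}_m)\,u_m .$$ Then $$\operatorname{logit}(Y=1\mid X)=\tilde M\, f(X)+C,$$ where $\operatorname{logit}(Y=1\mid X)=\log\frac{P(Y=1\mid X)}{P(Y=0\mid X)}$ and $C$ is a constant that does not depend on $X$ (it depends only on $\tilde M$ and the prior $P(Y=1)$).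
   Context: In the paper, $g=g_{\boldsymbol\theta}$ is a neural network whose sigmoid output $\sigma(g(\mathbf{x}))$ is interpreted as the probability that a bag (whole-slide image) is malignant given a single instance (image patch) $\mathbf{x}$, and $f(X)$ is the slide-level prediction obtained by averaging $g$ over the $\tilde M$ instances identified as informative. For a probability $P(\cdot)$, $\operatorname{logit}(\cdot)=\log\big(P(\cdot)/(1-P(\cdot))\big)$. *)

theory Defs
  imports "HOL-Analysis.Analysis"
begin

text \<open>Class-conditional instance densities: p y m x is the density of instance m at x
  given Y = y (True means Y = 1), with respect to a reference measure.
  A bag X is a function xs :: nat => 'a, instances indexed by {1..M}.\<close>

definition sigmoid :: "real \<Rightarrow> real" where
  "sigmoid t = 1 / (1 + exp (- t))"

text \<open>Posterior P(Y=1 | X) by Bayes' rule, where conditional independence of the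
  instances given Y means that the joint conditional density is the product.\<close>
definition bag_posterior ::
  "real \<Rightarrow> (bool \<Rightarrow> nat \<Rightarrow> 'a \<Rightarrow> real) \<Rightarrow> nat \<Rightarrow> (nat \<Rightarrow> 'a) \<Rightarrow> real" where
  "bag_posterior prior p M xs =
     prior * (\<Prod>m\<in>{1..M}. p True m (xs m)) /
     (prior * (\<Prod>m\<in>{1..M}. p True m (xs m)) + (1 - prior) * (\<Prod>m\<in>{1..M}. p False m (xs m)))"

definition inst_posterior ::
  "real \<Rightarrow> (bool \<Rightarrow> nat \<Rightarrow> 'a \<Rightarrow> real) \<Rightarrow> nat \<Rightarrow> 'a \<Rightarrow> real" where
  "inst_posterior prior p m x = prior * p True m x / (prior * p True m x + (1 - prior) * p False m x)"

definition bag_logit ::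
  "real \<Rightarrow> (bool \<Rightarrow> nat \<Rightarrow> 'a \<Rightarrow> real) \<Rightarrow> nat \<Rightarrow> (nat \<Rightarrow> 'a) \<Rightarrow> real" where
  "bag_logit prior p M xs = ln (bag_posterior prior p M xs / (1 - bag_posterior prior p M xs))"

definition ind_u :: "nat set \<Rightarrow> nat \<Rightarrow> real" where
  "ind_u I m = (if m \<in> I then 1 else 0)"

definition f_pool :: "('a \<Rightarrow> real) \<Rightarrow> nat set \<Rightarrow> nat \<Rightarrow> (nat \<Rightarrow> 'a) \<Rightarrow> real" where
  "f_pool g I M xs = (1 / real (card I)) * (\<Sum>m\<in>{1..M}. g (xs m) * ind_u I m)"

end

theory Submission
  imports Defs
begin

lemma sig_inv:
  fixes t q :: real
  assumes "sigmoid t = q" "0 < q" "q < 1"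
  shows "t = ln (q / (1 - q))"
proof -
  have e: "1 + exp (-t) = 1 / q" using assms unfolding sigmoid_def
    by (metis add_pos_pos divide_divide_eq_right exp_gt_zero mult.left_neutral nonzero_mult_div_cancel_left zero_less_one less_numeral_extra(3) divide_divide_eq_left')
  have "exp (-t) = (1 - q) / q" using e assms by (simp add: field_simps)
  hence "exp t = q / (1 - q)" using assms by (simp add: exp_minus field_simps)
  thus ?thesis by (metis ln_exp)
qed

lemma key:
  fixes prior :: real and p :: "bool \<Rightarrow> nat \<Rightarrow> 'a \<Rightarrow> real"
  assumes pr: "0 < prior" "prior < 1"
    and I: "I \<subseteq> {1..M}"
    and un: "\<forall>m\<in>{1..M} - I. \<forall>x. p True m x = p False m x"
    and inf: "\<forall>m\<in>I. \<forall>x. 0 < p True m x \<and> 0 < p False m x \<longrightarrow>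
              sigmoid (g x) = inst_posterior prior p m x"
    and pos: "\<forall>m\<in>{1..M}. 0 < p True m (xs m) \<and> 0 < p False m (xs m)"
  shows "bag_logit prior p M xs = real (card I) * f_pool g I M xs
           + (1 - real (card I)) * ln (prior / (1 - prior))"
proof -
  define a where "a m = p True m (xs m)" for m
  define b where "b m = p False m (xs m)" for m
  define L where "L = ln (prior / (1 - prior))"
  have fin: "finite I" using I finite_subset by blast
  have apos: "\<And>m. m \<in> {1..M} \<Longrightarrow> 0 < a m" and bpos: "\<And>m. m \<in> {1..M} \<Longrightarrow> 0 < b m"
    using pos a_def b_def by auto
  define PA where "PA = (\<Prod>m\<in>{1..M}. a m)"
  define PB where "PB = (\<Prod>m\<in>{1..M}. b m)"
  have PA: "PA > 0" unfolding PA_def using apos by (intro prod_pos) auto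
  have PB: "PB > 0" unfolding PB_def using bpos by (intro prod_pos) auto
  have post: "bag_posterior prior p M xs = prior * PA / (prior * PA + (1 - prior) * PB)"
    unfolding bag_posterior_def PA_def PB_def a_def b_def by simp
  have x1: "prior * PA > 0" "(1 - prior) * PB > 0" using PA PB pr by auto
  have ratio: "bag_posterior prior p M xs / (1 - bag_posterior prior p M xs)
      = (prior / (1 - prior)) * (PA / PB)"
  proof -
    define D where "D = prior * PA + (1 - prior) * PB"
    have D: "D > 0" using x1 D_def by auto
    have "1 - prior * PA / D = (1 - prior) * PB / D" using D unfolding D_def by (simp add: field_simps)
    hence "(prior * PA / D) / (1 - prior * PA / D) = (prior * PA) / ((1 - prior) * PB)"
      using D x1 by simp
    also have "\<dots> = (prior / (1 - prior)) * (PA / PB)" by simp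
    finally show ?thesis unfolding post D_def .
  qed
  have lnPA: "ln (PA / PB) = (\<Sum>m\<in>{1..M}. ln (a m / b m))"
  proof -
    have "PA / PB = (\<Prod>m\<in>{1..M}. a m / b m)" unfolding PA_def PB_def
      by (simp add: prod_dividef)
    also have "ln \<dots> = (\<Sum>m\<in>{1..M}. ln (a m / b m))"
      by (rule ln_prod) (use apos bpos in force)+
    finally show ?thesis .
  qed
  have bl: "bag_logit prior p M xs = L + (\<Sum>m\<in>{1..M}. ln (a m / b m))"
  proof -
    have "ln ((prior / (1 - prior)) * (PA / PB)) = ln (prior / (1 - prior)) + ln (PA / PB)"
      by (rule ln_mult_pos) (use pr PA PB in auto)
    thus ?thesis unfolding bag_logit_def ratio L_def lnPA[symmetric] .
  qed
  have s1: "(\<Sum>m\<in>{1..M}. ln (a m / b m)) = (\<Sum>m\<in>I. ln (a m / b m))"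
  proof (rule sum.mono_neutral_right)
    show "\<forall>i\<in>{1..M} - I. ln (a i / b i) = 0"
      using un a_def b_def bpos by auto
  qed (use I in auto)
  have gI: "g (xs m) = L + ln (a m / b m)" if m: "m \<in> I" for m
  proof -
    have mM: "m \<in> {1..M}" using m I by auto
    have am: "a m > 0" and bm: "b m > 0" using apos bpos mM by auto
    define q where "q = prior * a m / (prior * a m + (1 - prior) * b m)"
    have sq: "sigmoid (g (xs m)) = q" using inf m pos mM unfolding q_def inst_posterior_def a_def b_def
      by auto
    have y1: "prior * a m > 0" "(1 - prior) * b m > 0" using am bm pr by auto
    have q0: "0 < q" "q < 1" unfolding q_def using y1 by (auto simp: field_simps)
    have "q / (1 - q) = (prior / (1 - prior)) * (a m / b m)"
    proof -
      define D where "D = prior * a m + (1 - prior) * b m"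
      have D: "D > 0" using y1 D_def by auto
      have "1 - prior * a m / D = (1 - prior) * b m / D" using D unfolding D_def by (simp add: field_simps)
      hence "(prior * a m / D) / (1 - prior * a m / D) = (prior * a m) / ((1 - prior) * b m)"
        using D y1 by simp
      also have "\<dots> = (prior / (1 - prior)) * (a m / b m)" by simp
      finally show ?thesis unfolding q_def D_def .
    qed
    hence "g (xs m) = ln ((prior / (1 - prior)) * (a m / b m))"
      using sig_inv[OF sq q0] by simp
    also have "\<dots> = L + ln (a m / b m)" unfolding L_def by (rule ln_mult_pos) (use pr am bm in auto)
    finally show ?thesis .
  qed
  have fp: "real (card I) * f_pool g I M xs = (\<Sum>m\<in>I. g (xs m))"
  proof -
    have "(\<Sum>m\<in>{1..M}. g (xs m) * ind_u I m) = (\<Sum>m\<in>I. g (xs m))"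
    proof -
      have "(\<Sum>m\<in>{1..M}. g (xs m) * ind_u I m) = (\<Sum>m\<in>I. g (xs m) * ind_u I m)"
        by (rule sum.mono_neutral_right) (use I in \<open>auto simp: ind_u_def\<close>)
      also have "\<dots> = (\<Sum>m\<in>I. g (xs m))" by (simp add: ind_u_def)
      finally show ?thesis .
    qed
    moreover have "card I > 0 \<or> I = {}" using fin by auto
    ultimately show ?thesis unfolding f_pool_def by auto
  qed
  have "(\<Sum>m\<in>I. g (xs m)) = real (card I) * L + (\<Sum>m\<in>I. ln (a m / b m))"
    using gI by (simp add: sum.distrib)
  thus ?thesis using bl s1 fp L_def by (simp add: algebra_simps)
qed

theorem proposition1:
  "\<exists>C :: nat \<Rightarrow> real \<Rightarrow> real.
     \<forall>(\<mu> :: 'a measure) (p :: bool \<Rightarrow> nat \<Rightarrow> 'a \<Rightarrow> real) (prior :: real) (M :: nat)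
       (I :: nat set) (g :: 'a \<Rightarrow> real).
       0 < prior \<and> prior < 1
       \<and> (\<forall>y. \<forall>m\<in>{1..M}. p y m \<in> borel_measurable \<mu> \<and> (\<forall>x. 0 \<le> p y m x)
                         \<and> (\<integral>\<^sup>+ x. ennreal (p y m x) \<partial>\<mu>) = 1)
       \<and> I \<subseteq> {1..M} \<and> card I \<ge> 1
       \<and> (\<forall>m\<in>{1..M} - I. \<forall>x. p True m x = p False m x)
       \<and> (\<forall>m\<in>I. \<forall>x. 0 < p True m x \<and> 0 < p False m x \<longrightarrow>
              sigmoid (g x) = inst_posterior prior p m x)
     \<longrightarrow> (\<forall>xs :: nat \<Rightarrow> 'a.
            (\<forall>m\<in>{1..M}. 0 < p True m (xs m) \<and> 0 < p False m (xs m)) \<longrightarrow>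
            bag_logit prior p M xs = real (card I) * f_pool g I M xs + C (card I) prior)"
  apply (rule exI[of _ "\<lambda>k pr. (1 - real k) * ln (pr / (1 - pr))"])
  apply (intro allI impI)
  apply (elim conjE)
  apply (rule key)
  apply assumption+
  done

end
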